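(* Let $d$ be an even positive integer with $d\notin\{2,4,8\}$. For $x\in\mathbb{R}$ let ${\bm p}_x\in\mathbb{R}^d$ be defined by $({\bm p}_x)_{2i}=\sin(\omega_i x)$, $({\bm p}_x)_{2i+1}=\cos(\omega_i x)$ for $i=0,\dots,\tfrac d2-1$, with $\omega_i=10000^{-2i/d}$. Then the map $\mathbb{N}_{>0}\to\mathbb{R}^d$, $a\mapsto{\bm p}_a$, is injective; consequently the map $\mathbb{N}_{>0}^2\to\mathbb{R}^{2d}$, $(a,b)\mapsto[{\bm p}_a\,\|\,{\bm p}_b]$, is injective.
   Context: $[{\bm u}\,\|\,{\bm v}]$ denotes concatenation of vectors. $\mathbb{N}_{>0}$ denotes the positive integers. *)

theory Defs
  imports Complex_Main
begin

definition omega :: "nat \<Rightarrow> nat \<Rightarrow> real" where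
  "omega d i = 10000 powr (- (2 * real i) / real d)"

definition pe :: "nat \<Rightarrow> real \<Rightarrow> real list" where
  "pe d x = map (\<lambda>j. if even j then sin (omega d (j div 2) * x)
                                 else cos (omega d (j div 2) * x)) [0..<d]"

end

theory Submission
  imports Defs "HOL-Computational_Algebra.Primes"
begin

lemma sincos_eq:
  fixes x y :: real
  assumes "sin x = sin y" "cos x = cos y"
  shows "\<exists>n::int. x - y = n * 2 * pi"
proof -
  have "cos (x - y) = 1"
    using assms by (simp add: cos_diff)
  then show ?thesis by (simp add: cos_one_2pi_int)
qed

lemma mult2_10: "multiplicity (2::nat) (10 ^ 8) = 8"
proof -
  have "(10::nat)^8 = 2^8 * 5^8" by simp
  moreover have "multiplicity (2::nat) (5^8) = 0"
    by (simp add: not_dvd_imp_multiplicity_0)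
  moreover have "multiplicity (2::nat) (2^8 * 5^8) = 8 + multiplicity (2::nat) (5^8)"
    apply (subst prime_elem_multiplicity_mult_distrib)
    apply simp apply simp apply simp
    apply (subst multiplicity_prime_power) apply simp apply (rule refl)
    done
  ultimately show ?thesis by presburger
qed

lemma no_root:
  fixes m k d :: nat
  assumes "m ^ d * 10 ^ 8 = k ^ d" "m > 0" "k > 0"
  shows "d dvd 8"
proof -
  have "multiplicity 2 (m ^ d * 10 ^ 8) = multiplicity 2 (k ^ d)" using assms by simp
  hence "d * multiplicity 2 m + 8 = d * multiplicity 2 k"
    using assms mult2_10
    by (simp add: prime_elem_multiplicity_mult_distrib prime_elem_multiplicity_power_distrib)
  hence "8 = d * (multiplicity 2 k - multiplicity 2 m)"
    by (simp add: diff_mult_distrib2)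
  thus ?thesis by (metis dvd_triv_left)
qed

lemma omega0: "omega d 0 = 1" by (simp add: omega_def)

lemma omega1_pow: "d > 0 \<Longrightarrow> omega d 1 ^ d = 1 / 10 ^ 8"
proof -
  assume "d > 0"
  have "omega d 1 ^ d = 10000 powr (- 2 / real d * real d)"
    by (simp add: omega_def powr_realpow[symmetric] powr_powr)
  also have "\<dots> = 10000 powr (-2)" using \<open>d > 0\<close> by simp
  also have "\<dots> = 1 / 10 ^ 8" by (simp add: powr_minus powr_realpow[symmetric])
  finally show ?thesis .
qed

lemma inj1:
  fixes d :: nat
  assumes "d > 0" and "even d" and "d \<notin> {2, 4, 8}"
  shows "inj_on (\<lambda>a::nat. pe d (real a)) {a. a > 0}"
proof (rule inj_onI)
  fix a b :: nat
  assume "a \<in> {a. a > 0}" "b \<in> {a. a > 0}" and eq: "pe d (real a) = pe d (real b)"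
  have d4: "d > 3" using assms by (auto simp: even_iff_mod_2_eq_zero)
  have nth: "pe d x ! j = (if even j then sin (omega d (j div 2) * x) else cos (omega d (j div 2) * x))"
    if "j < d" for j x using that by (simp add: pe_def)
  let ?w = "omega d 1"
  have e0: "sin (real a) = sin (real b)" using arg_cong[OF eq, of "\<lambda>l. l ! 0"] nth[of 0] d4 by (simp add: omega0)
  have e1: "cos (real a) = cos (real b)" using arg_cong[OF eq, of "\<lambda>l. l ! 1"] nth[of 1] d4 by (simp add: omega0)
  have e2: "sin (?w * real a) = sin (?w * real b)" using arg_cong[OF eq, of "\<lambda>l. l ! 2"] nth[of 2] d4 by simp
  have e3: "cos (?w * real a) = cos (?w * real b)" using arg_cong[OF eq, of "\<lambda>l. l ! 3"] nth[of 3] d4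
    by (simp add: numeral_3_eq_3)
  obtain k :: int where k: "real a - real b = real_of_int k * 2 * pi" using sincos_eq[OF e0 e1] by blast
  obtain m :: int where m: "?w * real a - ?w * real b = real_of_int m * 2 * pi" using sincos_eq[OF e2 e3] by blast
  show "a = b"
  proof (rule ccontr)
    assume "a \<noteq> b"
    hence k0: "k \<noteq> 0" using k by auto
    have wpos: "?w > 0" by (simp add: omega_def)
    have "?w * (real_of_int k * 2 * pi) = real_of_int m * 2 * pi" using m k by (simp add: right_diff_distrib[symmetric])
    hence wk: "?w * k = m" by simp
    hence "(?w * k) ^ d = (real_of_int m) ^ d" by simp
    hence h: "real_of_int k ^ d * ?w ^ d = real_of_int m ^ d" by (simp add: power_mult_distrib mult.commute)
    have "real_of_int k ^ d = real_of_int k ^ d * (?w ^ d * 10 ^ 8)"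
      using omega1_pow[OF assms(1)] by simp
    also have "\<dots> = real_of_int m ^ d * 10 ^ 8" using h by (metis mult.assoc)
    finally have "real_of_int (k ^ d) = real_of_int (m ^ d * 10 ^ 8)" by simp
    hence "k ^ d = m ^ d * 10 ^ 8" by linarith
    hence "\<bar>k\<bar> ^ d = \<bar>m\<bar> ^ d * 10 ^ 8" by (metis power_abs abs_mult abs_numeral)
    hence "nat \<bar>k\<bar> ^ d = nat \<bar>m\<bar> ^ d * 10 ^ 8"
      by (metis abs_ge_zero nat_int nat_mult_distrib nat_numeral nat_power_eq zero_le_numeral zero_le_power)
    moreover have "m \<noteq> 0" using wk wpos k0 by auto
    ultimately have "d dvd 8" using no_root[of "nat \<bar>m\<bar>" d "nat \<bar>k\<bar>"] k0 by simp
    have d8: "d \<le> 8" using dvd_imp_le[OF \<open>d dvd 8\<close>] by simp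
    have "d \<noteq> 4" "d \<noteq> 8" using assms by auto
    hence "d = 6" using d4 d8 assms(2) by (auto simp: even_iff_mod_2_eq_zero)
    thus False using \<open>d dvd 8\<close> by simp
  qed
qed

theorem mainTheorem2:
  fixes d :: nat
  assumes "d > 0" and "even d" and "d \<notin> {2, 4, 8}"
  shows "inj_on (\<lambda>a::nat. pe d (real a)) {a. a > 0}
       \<and> inj_on (\<lambda>(a::nat, b::nat). pe d (real a) @ pe d (real b)) ({a. a > 0} \<times> {b. b > 0})"
proof
  show i: "inj_on (\<lambda>a::nat. pe d (real a)) {a. a > 0}" using inj1[OF assms] .
  show "inj_on (\<lambda>(a::nat, b::nat). pe d (real a) @ pe d (real b)) ({a. a > 0} \<times> {b. b > 0})"
  proof (rule inj_onI, clarsimp)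
    fix a b a' b' :: nat
    assume "a > 0" "b > 0" "a' > 0" "b' > 0" "pe d (real a) @ pe d (real b) = pe d (real a') @ pe d (real b')"
    moreover have "length (pe d x) = d" for x by (simp add: pe_def)
    ultimately show "a = a' \<and> b = b'" using i by (auto dest: inj_onD)
  qed
qed

end
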